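(* Let $R$ be a dp-finite ring such that $R/\mathfrak{m}$ is infinite for every maximal ideal $\mathfrak{m}$ of $R$. Then $\mathrm{br}(R)\le\mathrm{dp\text{-}rk}(R)$; in particular, $\mathrm{br}(R)$ is finite.
   Context: Rings are commutative and unital; $\mathrm{dp\text{-}rk}(R)$ denotes the dp-rank of the structure $(R,+,\cdot)$, and $R$ is dp-finite if this is finite. The breadth $\mathrm{br}(R)$ satisfies $\mathrm{br}(R)\le n$ iff for any $x_1,\ldots,x_{n+1}\in R$ there is $i$ such that the ideal generated by $x_1,\ldots,x_{n+1}$ equals the ideal generated by $\{x_j:j\neq i\}$. *)

theory Defs
  imports Main
begin

datatype rterm = RVar nat | RAdd rterm rterm | RMul rterm rterm

datatype rform = REq rterm rterm | RNeg rform | RConj rform rform | RExists nat rform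

fun teval :: "(nat \<Rightarrow> 'a::comm_ring_1) \<Rightarrow> rterm \<Rightarrow> 'a" where
  "teval e (RVar v) = e v"
| "teval e (RAdd s t) = teval e s + teval e t"
| "teval e (RMul s t) = teval e s * teval e t"

fun sat :: "(nat \<Rightarrow> 'a::comm_ring_1) \<Rightarrow> rform \<Rightarrow> bool" where
  "sat e (REq s t) = (teval e s = teval e t)"
| "sat e (RNeg f) = (\<not> sat e f)"
| "sat e (RConj f g) = (sat e f \<and> sat e g)"
| "sat e (RExists v f) = (\<exists>a. sat (e(v := a)) f)"

text \<open>An ict-pattern of depth n in the home sort (object variable = variable 0,
  parameter variables = all others), in the compactness form: for every finite m
  the pattern of width m is realized in the structure itself.\<close>

definition ict_pattern :: "'a::comm_ring_1 itself \<Rightarrow> nat \<Rightarrow> bool" where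
  "ict_pattern TYPE('a) n \<longleftrightarrow>
     (\<exists>\<phi> :: nat \<Rightarrow> rform. \<forall>m::nat. \<exists>b :: nat \<Rightarrow> nat \<Rightarrow> nat \<Rightarrow> 'a.
        \<forall>\<eta> :: nat \<Rightarrow> nat. (\<forall>i<n. \<eta> i < m) \<longrightarrow>
          (\<exists>a::'a. \<forall>i<n. \<forall>j<m. (sat ((b i j)(0 := a)) (\<phi> i) \<longleftrightarrow> j = \<eta> i)))"

definition dp_finite :: "'a::comm_ring_1 itself \<Rightarrow> bool" where
  "dp_finite T \<longleftrightarrow> (\<exists>N. \<forall>n. ict_pattern T n \<longrightarrow> n \<le> N)"

text \<open>dp-rank = supremum of depths of ict-patterns (meaningful when dp-finite).\<close>
definition dp_rank :: "'a::comm_ring_1 itself \<Rightarrow> nat" where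
  "dp_rank T = (GREATEST n. ict_pattern T n)"

definition is_ideal :: "'a::comm_ring_1 set \<Rightarrow> bool" where
  "is_ideal I \<longleftrightarrow> 0 \<in> I \<and> (\<forall>x\<in>I. \<forall>y\<in>I. x + y \<in> I) \<and> (\<forall>r. \<forall>x\<in>I. r * x \<in> I)"

definition maximal_ideal :: "'a::comm_ring_1 set \<Rightarrow> bool" where
  "maximal_ideal M \<longleftrightarrow> is_ideal M \<and> M \<noteq> UNIV \<and>
     (\<forall>J. is_ideal J \<and> M \<subseteq> J \<longrightarrow> J = M \<or> J = UNIV)"

definition gen_ideal :: "'a::comm_ring_1 set \<Rightarrow> 'a set" where
  "gen_ideal S = \<Inter>{I. is_ideal I \<and> S \<subseteq> I}"

definition quotient_ring_set :: "'a::comm_ring_1 set \<Rightarrow> 'a set set" where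
  "quotient_ring_set M = UNIV // {(x, y). x - y \<in> M}"

definition breadth_le :: "'a::comm_ring_1 itself \<Rightarrow> nat \<Rightarrow> bool" where
  "breadth_le T n \<longleftrightarrow>
     (\<forall>x :: nat \<Rightarrow> 'a. \<exists>i\<le>n.
        gen_ideal (x ` {0..n}) = gen_ideal (x ` ({0..n} - {i})))"

end

theory Submission
  imports Defs
begin

lemma ideal_sum:
  assumes "is_ideal J" "finite T" "\<forall>t\<in>T. f t \<in> J"
  shows "sum f T \<in> J"
  using assms(2,3)
proof (induction T rule: finite_induct)
  case empty then show ?case using assms(1) by (simp add: is_ideal_def)
next
  case (insert t T) then show ?case using assms(1) by (simp add: is_ideal_def)
qed

lemma ideal_neg:
  assumes "is_ideal J" "u \<in> J" shows "- u \<in> J"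
proof -
  have "(-1) * u \<in> J" using assms unfolding is_ideal_def by blast
  then show ?thesis by simp
qed

lemma ideal_diff:
  assumes "is_ideal J" "u \<in> J" "v \<in> J" shows "u - v \<in> J"
proof -
  have "u + (- v) \<in> J" using assms ideal_neg[OF assms(1,3)] unfolding is_ideal_def by blast
  then show ?thesis by simp
qed

lemma gen_ideal_ideal: "is_ideal (gen_ideal S)"
  unfolding gen_ideal_def is_ideal_def by blast

lemma gen_ideal_sub: "S \<subseteq> gen_ideal S"
  unfolding gen_ideal_def by blast

lemma gen_ideal_least: "is_ideal J \<Longrightarrow> S \<subseteq> J \<Longrightarrow> gen_ideal S \<subseteq> J"
  unfolding gen_ideal_def by blast

lemma gen_ideal_mono: "S \<subseteq> T \<Longrightarrow> gen_ideal S \<subseteq> gen_ideal T"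
  unfolding gen_ideal_def by blast

lemma exists_maximal:
  fixes A :: "'a::comm_ring_1 set"
  assumes "is_ideal A" "1 \<notin> A"
  shows "\<exists>M. maximal_ideal M \<and> A \<subseteq> M"
proof -
  define S where "S = {J::'a set. is_ideal J \<and> A \<subseteq> J \<and> 1 \<notin> J}"
  have "\<forall>C\<in>chains S. \<exists>U\<in>S. \<forall>X\<in>C. X \<subseteq> U"
  proof
    fix C assume C: "C \<in> chains S"
    show "\<exists>U\<in>S. \<forall>X\<in>C. X \<subseteq> U"
    proof (cases "C = {}")
      case True then show ?thesis using assms S_def by auto
    next
      case False
      have CS: "C \<subseteq> S" using chainsD2[OF C] .
      have "is_ideal (\<Union>C)"
        unfolding is_ideal_def
      proof (intro conjI ballI allI)
        obtain X where "X \<in> C" using False by auto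
        then have "is_ideal X" using CS S_def by auto
        then have "0 \<in> X" unfolding is_ideal_def by blast
        then show "0 \<in> \<Union>C" using \<open>X \<in> C\<close> by blast
      next
        fix u v assume "u \<in> \<Union>C" "v \<in> \<Union>C"
        then obtain X Y where XY: "X \<in> C" "Y \<in> C" "u \<in> X" "v \<in> Y" by auto
        have XI: "is_ideal X" "is_ideal Y" using XY CS S_def by auto
        from chainsD[OF C XY(1,2)] show "u + v \<in> \<Union>C"
        proof
          assume "X \<subseteq> Y"
          then have "u + v \<in> Y" using XY XI(2) unfolding is_ideal_def by blast
          then show ?thesis using XY by blast
        next
          assume "Y \<subseteq> X"
          then have "u + v \<in> X" using XY XI(1) unfolding is_ideal_def by blast
          then show ?thesis using XY by blast
        qed
      next
        fix r u assume "u \<in> \<Union>C"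
        then obtain X where X: "X \<in> C" "u \<in> X" by auto
        then have "is_ideal X" using CS S_def by auto
        then have "r * u \<in> X" using X unfolding is_ideal_def by blast
        then show "r * u \<in> \<Union>C" using X by blast
      qed
      moreover have "A \<subseteq> \<Union>C" "1 \<notin> \<Union>C" using False CS S_def by auto
      ultimately show ?thesis using S_def by auto
    qed
  qed
  from Zorn_Lemma2[OF this] obtain M where M: "M \<in> S" "\<forall>X\<in>S. M \<subseteq> X \<longrightarrow> X = M" by blast
  have "maximal_ideal M"
    unfolding maximal_ideal_def
  proof (intro conjI allI impI)
    show "is_ideal M" using M S_def by auto
    show "M \<noteq> UNIV" using M S_def by auto
  next
    fix J :: "'a set" assume J: "is_ideal J \<and> M \<subseteq> J"
    show "J = M \<or> J = UNIV"
    proof (cases "1 \<in> J")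
      case True
      have "\<forall>r. r \<in> J" using J True unfolding is_ideal_def by (metis mult.right_neutral)
      then show ?thesis by auto
    next
      case False
      then have "J \<in> S" using J M S_def by auto
      then show ?thesis using M J by auto
    qed
  qed
  then show ?thesis using M S_def by auto
qed

lemma infinite_reps:
  fixes M :: "'a::comm_ring_1 set"
  assumes "is_ideal M" "infinite (quotient_ring_set M)"
  shows "\<exists>c::nat \<Rightarrow> 'a. \<forall>j j'. j \<noteq> j' \<longrightarrow> c j - c j' \<notin> M"
proof -
  define rel where "rel = {(x::'a, y). x - y \<in> M}"
  obtain f :: "nat \<Rightarrow> 'a set" where f: "inj f" "range f \<subseteq> UNIV // rel"
    using infinite_countable_subset assms(2) unfolding quotient_ring_set_def rel_def by blast
  have "\<forall>j. \<exists>x. f j = rel `` {x}" using f(2) unfolding quotient_def by blast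
  then obtain c where c: "\<And>j. f j = rel `` {c j}" by metis
  have "c j - c j' \<notin> M" if "j \<noteq> j'" for j j'
  proof
    assume h: "c j - c j' \<in> M"
    have "rel `` {c j} = rel `` {c j'}"
    proof (intro set_eqI iffI)
      fix y assume "y \<in> rel `` {c j}"
      then have "c j - y \<in> M" by (simp add: rel_def)
      then have "(c j - y) - (c j - c j') \<in> M" using ideal_diff[OF assms(1)] h by blast
      then show "y \<in> rel `` {c j'}" by (simp add: rel_def)
    next
      fix y assume "y \<in> rel `` {c j'}"
      then have "c j' - y \<in> M" by (simp add: rel_def)
      then have "(c j' - y) + (c j - c j') \<in> M" using assms(1) h unfolding is_ideal_def by blast
      then show "y \<in> rel `` {c j}" by (simp add: rel_def)
    qed
    then have "f j = f j'" using c by simp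
    then show False using f(1) that by (simp add: inj_def)
  qed
  then show ?thesis by blast
qed

fun lc :: "nat \<Rightarrow> rterm" where
  "lc 0 = RVar 1"
| "lc (Suc k) = RAdd (lc k) (RMul (RVar (2*k+3)) (RVar (2*k+2)))"

fun exq :: "nat \<Rightarrow> rform \<Rightarrow> rform" where
  "exq 0 f = f"
| "exq (Suc k) f = RExists (2*k+3) (exq k f)"

definition upd :: "(nat \<Rightarrow> 'a) \<Rightarrow> (nat \<Rightarrow> 'a) \<Rightarrow> nat \<Rightarrow> nat \<Rightarrow> 'a" where
  "upd e r k = (\<lambda>v. if odd v \<and> 3 \<le> v \<and> (v - 3) div 2 < k then r ((v - 3) div 2) else e v)"

lemma upd_Suc: "upd (e(2*k+3 := a)) r k = upd e (r(k := a)) (Suc k)"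
proof
  fix v
  show "upd (e(2*k+3 := a)) r k v = upd e (r(k := a)) (Suc k) v"
  proof (cases "odd v \<and> 3 \<le> v")
    case True
    define t where "t = (v - 3) div 2"
    have t: "v = 2*t+3" using True unfolding t_def by presburger
    then show ?thesis by (auto simp: upd_def)
  next
    case False
    then have "v \<noteq> 2*k+3" by auto
    then show ?thesis using False by (auto simp: upd_def)
  qed
qed

lemma exq_sat: "sat e (exq k F) \<longleftrightarrow> (\<exists>r. sat (upd e r k) F)"
proof (induction k arbitrary: e)
  case 0
  have "upd e r 0 = e" for r :: "nat \<Rightarrow> 'a" by (auto simp: upd_def)
  then show ?case by simp
next
  case (Suc k)
  have "sat e (exq (Suc k) F) \<longleftrightarrow> (\<exists>a. sat (e(2*k+3:=a)) (exq k F))"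
    by (simp only: exq.simps sat.simps)
  also have "\<dots> \<longleftrightarrow> (\<exists>a r. sat (upd (e(2*k+3:=a)) r k) F)"
    using Suc.IH by blast
  also have "\<dots> \<longleftrightarrow> (\<exists>a r. sat (upd e (r(k := a)) (Suc k)) F)"
    by (simp only: upd_Suc)
  also have "\<dots> \<longleftrightarrow> (\<exists>r. sat (upd e r (Suc k)) F)"
  proof
    assume "\<exists>r. sat (upd e r (Suc k)) F"
    then obtain r where "sat (upd e r (Suc k)) F" by blast
    then have "sat (upd e (r(k := r k)) (Suc k)) F" by simp
    then show "\<exists>a r. sat (upd e (r(k := a)) (Suc k)) F" by blast
  qed blast
  finally show ?case .
qed

lemma lc_eval: "k' \<le> k \<Longrightarrow> teval (upd e r k) (lc k') = e 1 + (\<Sum>t<k'. r t * e (2*t+2))"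
proof (induction k')
  case 0
  then show ?case by (simp add: upd_def)
next
  case (Suc k')
  have "upd e r k (2*k'+3) = r k'" using Suc.prems by (simp add: upd_def)
  moreover have "upd e r k (2*k'+2) = e (2*k'+2)" by (simp add: upd_def)
  ultimately show ?case using Suc by (simp add: algebra_simps)
qed

definition psi :: "nat \<Rightarrow> rform" where "psi k = exq k (REq (RVar 0) (lc k))"

lemma psi_sat: "sat e (psi k) \<longleftrightarrow> (\<exists>r. e 0 = e 1 + (\<Sum>t<k. r t * e (2*t+2)))"
proof -
  have "upd e r k 0 = e 0" for r :: "nat \<Rightarrow> 'a" by (simp add: upd_def)
  then show ?thesis unfolding psi_def exq_sat by (simp add: lc_eval)
qed

lemma pattern_from_bad:
  fixes x :: "nat \<Rightarrow> 'a::comm_ring_1" and n :: nat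
  assumes maxinf: "\<And>M::'a set. maximal_ideal M \<Longrightarrow> infinite (quotient_ring_set M)"
    and bad: "\<And>i. i \<le> n \<Longrightarrow> x i \<notin> gen_ideal (x ` ({0..n} - {i}))"
  shows "ict_pattern TYPE('a) (Suc n)"
proof -
  define z where "z i t = (if t = i then 0 else x t)" for i t
  define I where "I i = {s. \<exists>r. s = (\<Sum>t<Suc n. r t * z i t)}" for i
  have Iid: "is_ideal (I i)" for i
    unfolding is_ideal_def
  proof (intro conjI ballI allI)
    show "0 \<in> I i" unfolding I_def by (rule CollectI, rule exI[of _ "\<lambda>_. 0"], simp)
  next
    fix u v assume "u \<in> I i" "v \<in> I i"
    then obtain r r' where "u = (\<Sum>t<Suc n. r t * z i t)" "v = (\<Sum>t<Suc n. r' t * z i t)"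
      unfolding I_def by blast
    then have "u + v = (\<Sum>t<Suc n. (r t + r' t) * z i t)"
      by (simp add: sum.distrib distrib_right)
    then show "u + v \<in> I i" unfolding I_def by (intro CollectI exI[of _ "\<lambda>t. r t + r' t"])
  next
    fix s u assume "u \<in> I i"
    then obtain r where "u = (\<Sum>t<Suc n. r t * z i t)" unfolding I_def by blast
    then have "s * u = (\<Sum>t<Suc n. (s * r t) * z i t)"
      by (simp only: sum_distrib_left mult.assoc)
    then show "s * u \<in> I i" unfolding I_def by (intro CollectI exI[of _ "\<lambda>t. s * r t"])
  qed
  have Isub: "I i \<subseteq> gen_ideal (x ` ({0..n} - {i}))" for i
  proof
    fix u assume "u \<in> I i"
    then obtain r where u: "u = (\<Sum>t<Suc n. r t * z i t)" unfolding I_def by blast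
    let ?G = "gen_ideal (x ` ({0..n} - {i}))"
    have G: "is_ideal ?G" by (rule gen_ideal_ideal)
    have "\<forall>t\<in>{..<Suc n}. r t * z i t \<in> ?G"
    proof
      fix t assume t: "t \<in> {..<Suc n}"
      show "r t * z i t \<in> ?G"
      proof (cases "t = i")
        case True
        then show ?thesis using G unfolding z_def is_ideal_def by simp
      next
        case False
        then have "x t \<in> ?G" using t gen_ideal_sub[of "x ` ({0..n} - {i})"] by auto
        then show ?thesis using G False unfolding z_def is_ideal_def by simp
      qed
    qed
    then show "u \<in> ?G" unfolding u by (intro ideal_sum[OF G]) auto
  qed
  define Ann where "Ann i = {c. c * x i \<in> I i}" for i
  have Annid: "is_ideal (Ann i)" for i
    using Iid[of i] unfolding Ann_def is_ideal_def by (auto simp: distrib_right mult.assoc)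
  have Ann1: "1 \<notin> Ann i" if "i \<le> n" for i
    using Isub[of i] bad[OF that] unfolding Ann_def by auto
  have "\<forall>i. \<exists>c::nat \<Rightarrow> 'a. i \<le> n \<longrightarrow> (\<forall>j j'. j \<noteq> j' \<longrightarrow> c j - c j' \<notin> Ann i)"
  proof
    fix i
    show "\<exists>c::nat \<Rightarrow> 'a. i \<le> n \<longrightarrow> (\<forall>j j'. j \<noteq> j' \<longrightarrow> c j - c j' \<notin> Ann i)"
    proof (cases "i \<le> n")
      case True
      obtain M where M: "maximal_ideal M" "Ann i \<subseteq> M"
        using exists_maximal[OF Annid Ann1[OF True]] by blast
      have "is_ideal M" using M unfolding maximal_ideal_def by blast
      then obtain c :: "nat \<Rightarrow> 'a" where "\<forall>j j'. j \<noteq> j' \<longrightarrow> c j - c j' \<notin> M"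
        using infinite_reps maxinf[OF M(1)] by blast
      then show ?thesis using M(2) by blast
    qed simp
  qed
  then obtain C :: "nat \<Rightarrow> nat \<Rightarrow> 'a" where
    C: "\<And>i j j'. i \<le> n \<Longrightarrow> j \<noteq> j' \<Longrightarrow> C i j - C i j' \<notin> Ann i"
    by metis
  have zsum: "(\<Sum>t<Suc n. f t * z i t) = (\<Sum>t<Suc n. f t * x t) - f i * x i"
    if "i \<le> n" for i and f :: "nat \<Rightarrow> 'a"
  proof -
    have "(\<Sum>t<Suc n. f t * x t) = (\<Sum>t<Suc n. f t * z i t + (if t = i then f i * x i else 0))"
      by (rule sum.cong) (auto simp: z_def)
    also have "\<dots> = (\<Sum>t<Suc n. f t * z i t) + f i * x i"
      using that by (simp add: sum.distrib)
    finally show ?thesis by simp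
  qed
  define b where "b i j v = (if v = 1 then C i j * x i else if even v \<and> 2 \<le> v then z i ((v - 2) div 2) else 0)"
    for i j v
  have bsat: "sat ((b i j)(0 := a)) (psi (Suc n)) \<longleftrightarrow>
      (\<exists>r. a = C i j * x i + (\<Sum>t<Suc n. r t * z i t))" for i j a
  proof -
    have "((b i j)(0 := a)) (2*t+2) = z i t" for t by (simp add: b_def)
    then show ?thesis unfolding psi_sat by (simp add: b_def)
  qed
  show ?thesis
    unfolding ict_pattern_def
  proof (intro exI[of _ "\<lambda>_. psi (Suc n)"] allI exI[of _ b] impI)
    fix m and \<eta> :: "nat \<Rightarrow> nat"
    assume "\<forall>i<Suc n. \<eta> i < m"
    define a where "a = (\<Sum>t<Suc n. C t (\<eta> t) * x t)"
    have "sat ((b i j)(0 := a)) (psi (Suc n)) \<longleftrightarrow> j = \<eta> i" if i: "i < Suc n" for i j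
    proof
      assume "sat ((b i j)(0 := a)) (psi (Suc n))"
      then obtain r where r: "a = C i j * x i + (\<Sum>t<Suc n. r t * z i t)" using bsat by blast
      show "j = \<eta> i"
      proof (rule ccontr)
        assume ne: "j \<noteq> \<eta> i"
        have "(C i (\<eta> i) - C i j) * x i = (\<Sum>t<Suc n. (r t - C t (\<eta> t)) * z i t)"
        proof -
          have e1: "(\<Sum>t<Suc n. C t (\<eta> t) * z i t) = a - C i (\<eta> i) * x i"
            using zsum[of i "\<lambda>t. C t (\<eta> t)"] i unfolding a_def by simp
          have "(\<Sum>t<Suc n. (r t - C t (\<eta> t)) * z i t)
              = (\<Sum>t<Suc n. r t * z i t) - (\<Sum>t<Suc n. C t (\<eta> t) * z i t)"
            by (simp add: left_diff_distrib sum_subtractf)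
          also have "\<dots> = (C i (\<eta> i) - C i j) * x i" using e1 r by (simp add: algebra_simps)
          finally show ?thesis by simp
        qed
        then have "C i (\<eta> i) - C i j \<in> Ann i" unfolding Ann_def I_def
          by (intro CollectI exI[of _ "\<lambda>t. r t - C t (\<eta> t)"])
        then show False using C[of i "\<eta> i" j] ne i by simp
      qed
    next
      assume "j = \<eta> i"
      moreover have "(\<Sum>t<Suc n. C t (\<eta> t) * z i t) = a - C i (\<eta> i) * x i"
        using zsum[of i "\<lambda>t. C t (\<eta> t)"] i unfolding a_def by simp
      ultimately have "a = C i j * x i + (\<Sum>t<Suc n. C t (\<eta> t) * z i t)"
        by simp
      then show "sat ((b i j)(0 := a)) (psi (Suc n))"
        by (intro bsat[THEN iffD2] exI[of _ "\<lambda>t. C t (\<eta> t)"])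
    qed
    then show "\<exists>a. \<forall>i<Suc n. \<forall>j<m. sat ((b i j)(0 := a)) (psi (Suc n)) = (j = \<eta> i)"
      by blast
  qed
qed

theorem lemma5p6:
  assumes "dp_finite TYPE('a::comm_ring_1)"
    and "\<And>M::'a set. maximal_ideal M \<Longrightarrow> infinite (quotient_ring_set M)"
  shows "breadth_le TYPE('a) (dp_rank TYPE('a))"
proof (rule ccontr)
  let ?N = "dp_rank TYPE('a)"
  obtain B where B: "\<forall>n. ict_pattern TYPE('a) n \<longrightarrow> n \<le> B"
    using assms(1) unfolding dp_finite_def by blast
  assume "\<not> breadth_le TYPE('a) ?N"
  then obtain x :: "nat \<Rightarrow> 'a" where
    x: "\<And>i. i \<le> ?N \<Longrightarrow> gen_ideal (x ` {0..?N}) \<noteq> gen_ideal (x ` ({0..?N} - {i}))"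
    unfolding breadth_le_def by blast
  have h: "x i \<notin> gen_ideal (x ` ({0..?N} - {i}))" if i: "i \<le> ?N" for i
  proof
    let ?G = "gen_ideal (x ` ({0..?N} - {i}))"
    assume xi: "x i \<in> ?G"
    have "x ` {0..?N} \<subseteq> ?G"
    proof
      fix u assume "u \<in> x ` {0..?N}"
      then obtain t where t: "t \<in> {0..?N}" "u = x t" by blast
      show "u \<in> ?G"
      proof (cases "t = i")
        case True then show ?thesis using xi t by simp
      next
        case False then show ?thesis using t gen_ideal_sub[of "x ` ({0..?N} - {i})"] by auto
      qed
    qed
    then have "gen_ideal (x ` {0..?N}) \<subseteq> ?G" by (rule gen_ideal_least[OF gen_ideal_ideal])
    moreover have "?G \<subseteq> gen_ideal (x ` {0..?N})" by (rule gen_ideal_mono) auto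
    ultimately show False using x[OF i] by blast
  qed
  have "ict_pattern TYPE('a) (Suc ?N)" by (rule pattern_from_bad[where x=x and n="?N", OF assms(2) h])
  then have "Suc ?N \<le> ?N" unfolding dp_rank_def
    by (rule Greatest_le_nat) (use B in blast)
  then show False by simp
qed

end
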